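(* Let $A, B, C, F \in \mathbb{R}^{n\times n}$ with $A$ invertible, and suppose $\rho\left(\lvert CA^{-1}B\rvert\right) < 1$. Then the matrix equation $$AX + B\lvert CX\rvert = F$$ has exactly one solution $X \in \mathbb{R}^{n\times n}$.
   Context: $\rho(\cdot)$ is the spectral radius and $\lvert M\rvert$ the entrywise absolute value of a matrix $M$. *)

theory Defs
  imports "Jordan_Normal_Form.Spectral_Radius"
begin

definition abs_mat :: "real mat \<Rightarrow> real mat" where
  "abs_mat M = map_mat abs M"

definition real_spectral_radius :: "real mat \<Rightarrow> real" where
  "real_spectral_radius M = spectral_radius (map_mat complex_of_real M)"

end

theory Submission
  imports Defs
begin

lemma map_of_real_pow:
  fixes N :: "real mat"
  assumes N: "N \<in> carrier_mat n n"
  shows "(map_mat complex_of_real N) ^\<^sub>m k = map_mat complex_of_real (N ^\<^sub>m k)"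
proof (induction k)
  case 0
  then show ?case using N by (auto intro!: eq_matI)
next
  case (Suc k)
  show ?case unfolding pow_mat.simps Suc
    using N by (auto intro!: eq_matI simp: scalar_prod_def of_real_sum)
qed

lemma smult_pow:
  fixes N :: "real mat"
  assumes N: "N \<in> carrier_mat n n"
  shows "(s \<cdot>\<^sub>m N) ^\<^sub>m k = (s ^ k) \<cdot>\<^sub>m (N ^\<^sub>m k)"
proof (induction k)
  case 0
  then show ?case using N by (auto intro!: eq_matI)
next
  case (Suc k)
  show ?case unfolding pow_mat.simps Suc
    using N by (auto intro!: eq_matI simp: scalar_prod_def sum_distrib_left mult_ac)
qed

lemma eig_scale:
  fixes Nc :: "complex mat"
  assumes N: "Nc \<in> carrier_mat n n" and c: "c \<noteq> 0"
    and ev: "eigenvalue (c \<cdot>\<^sub>m Nc) \<mu>"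
  shows "eigenvalue Nc (\<mu> / c)"
proof -
  from ev obtain v where v: "v \<in> carrier_vec n" "v \<noteq> 0\<^sub>v n" "(c \<cdot>\<^sub>m Nc) *\<^sub>v v = \<mu> \<cdot>\<^sub>v v"
    unfolding eigenvalue_def eigenvector_def using N by auto
  have "Nc *\<^sub>v v = (\<mu> / c) \<cdot>\<^sub>v v"
  proof (rule eq_vecI)
    fix i assume i: "i < dim_vec ((\<mu> / c) \<cdot>\<^sub>v v)"
    have e1: "((c \<cdot>\<^sub>m Nc) *\<^sub>v v) $ i = (\<mu> \<cdot>\<^sub>v v) $ i" using v by simp
    have e2: "((c \<cdot>\<^sub>m Nc) *\<^sub>v v) $ i = c * (Nc *\<^sub>v v) $ i" using i N v(1)
      by (auto simp: scalar_prod_def sum_distrib_left mult_ac)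
    have "c * (Nc *\<^sub>v v) $ i = \<mu> * v $ i" using e1 e2 i v N by simp
    thus "(Nc *\<^sub>v v) $ i = ((\<mu> / c) \<cdot>\<^sub>v v) $ i" using i c v
      by (auto simp: field_simps)
  qed (use N v in auto)
  thus ?thesis unfolding eigenvalue_def eigenvector_def using v N by auto
qed

lemma decay:
  fixes N :: "real mat"
  assumes N: "N \<in> carrier_mat n n" and sr: "real_spectral_radius N < 1"
  shows "\<exists>c r. 0 \<le> r \<and> r < 1 \<and> (\<forall>k i j. i < n \<longrightarrow> j < n \<longrightarrow> \<bar>(N ^\<^sub>m k) $$ (i,j)\<bar> \<le> c * r ^ k)"
proof (cases "n = 0")
  case True
  then show ?thesis by (intro exI[of _ 0]) auto
next
  case False
  hence n: "n > 0" by simp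
  define Nc where "Nc = map_mat complex_of_real N"
  have Nc: "Nc \<in> carrier_mat n n" using N unfolding Nc_def by simp
  define \<rho> where "\<rho> = spectral_radius Nc"
  have rho1: "\<rho> < 1" using sr unfolding \<rho>_def Nc_def real_spectral_radius_def .
  have "\<rho> \<in> norm ` spectrum Nc" unfolding \<rho>_def by (rule spectral_radius_mem_max(1)[OF Nc n])
  hence rho0: "\<rho> \<ge> 0" by auto
  define s where "s = 2 / (1 + \<rho>)"
  have s1: "s > 1" using rho0 rho1 unfolding s_def by (simp add: field_simps)
  have srho: "s * \<rho> < 1" using rho0 rho1 unfolding s_def by (simp add: field_simps)
  define N' where "N' = map_mat complex_of_real (s \<cdot>\<^sub>m N)"
  have N': "N' \<in> carrier_mat n n" using N unfolding N'_def by simp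
  have N'eq: "N' = complex_of_real s \<cdot>\<^sub>m Nc" unfolding N'_def Nc_def using N
    by (auto intro!: eq_matI)
  have "spectral_radius N' \<in> norm ` spectrum N'" by (rule spectral_radius_mem_max(1)[OF N' n])
  then obtain \<mu> where mu: "eigenvalue N' \<mu>" "spectral_radius N' = norm \<mu>"
    unfolding spectrum_def by auto
  have "eigenvalue Nc (\<mu> / complex_of_real s)"
    by (rule eig_scale[OF Nc _ mu(1)[unfolded N'eq]]) (use s1 in auto)
  hence "norm (\<mu> / complex_of_real s) \<in> norm ` spectrum Nc" unfolding spectrum_def by auto
  hence "norm (\<mu> / complex_of_real s) \<le> \<rho>" unfolding \<rho>_def using spectral_radius_mem_max(2)[OF Nc n] by blast
  hence "norm \<mu> / s \<le> \<rho>" using s1 by (simp add: norm_divide)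
  hence "norm \<mu> \<le> s * \<rho>" using s1 by (simp add: field_simps)
  hence "spectral_radius N' < 1" using mu(2) srho by simp
  from spectral_radius_jnf_norm_bound_less_1_upper_triangular[OF N' this]
  obtain c where c: "\<And>k. norm_bound (N' ^\<^sub>m k) c" by auto
  show ?thesis
  proof (rule exI[of _ c], rule exI[of _ "1/s"], intro conjI allI impI)
    show "0 \<le> 1/s" using s1 by auto
    show "1/s < 1" using s1 by auto
    fix k i j assume ij: "i < n" "j < n"
    have "N' ^\<^sub>m k = map_mat complex_of_real ((s ^ k) \<cdot>\<^sub>m (N ^\<^sub>m k))"
      unfolding N'_def map_of_real_pow[OF smult_carrier_mat[OF N]] smult_pow[OF N] ..
    hence "norm ((N' ^\<^sub>m k) $$ (i,j)) = s ^ k * \<bar>(N ^\<^sub>m k) $$ (i,j)\<bar>"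
      using ij N s1 by (simp add: abs_mult norm_mult norm_power)
    moreover have "norm ((N' ^\<^sub>m k) $$ (i,j)) \<le> c" using c[of k] ij N'
      unfolding norm_bound_def by auto
    ultimately have "s ^ k * \<bar>(N ^\<^sub>m k) $$ (i,j)\<bar> \<le> c" by simp
    moreover have "s ^ k > 0" using s1 by simp
    ultimately show "\<bar>(N ^\<^sub>m k) $$ (i,j)\<bar> \<le> c * (1/s) ^ k"
      by (simp add: field_simps power_divide)
  qed
qed

lemma mult_entry:
  fixes P Q :: "real mat"
  assumes "P \<in> carrier_mat n n" "Q \<in> carrier_mat n n" "i < n" "j < n"
  shows "(P * Q) $$ (i,j) = (\<Sum>l<n. P $$ (i,l) * Q $$ (l,j))"
  using assms by (auto simp: scalar_prod_def atLeast0LessThan intro!: sum.cong)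

lemma pow_comm:
  fixes N :: "real mat"
  assumes N: "N \<in> carrier_mat n n"
  shows "N * N ^\<^sub>m k = N ^\<^sub>m k * N"
proof (induction k)
  case 0
  then show ?case using N by simp
next
  case (Suc k)
  have "N * N ^\<^sub>m Suc k = (N * N ^\<^sub>m k) * N"
    using N by (simp add: assoc_mult_mat[OF N pow_carrier_mat[OF N] N])
  also have "\<dots> = N ^\<^sub>m Suc k * N" using Suc by simp
  finally show ?case .
qed

definition Tmap :: "real mat \<Rightarrow> real mat \<Rightarrow> real mat \<Rightarrow> real mat" where
  "Tmap G M Z = G - M * abs_mat Z"

lemma Tmap_carrier: "G \<in> carrier_mat n n \<Longrightarrow> M \<in> carrier_mat n n \<Longrightarrow> Z \<in> carrier_mat n n
  \<Longrightarrow> Tmap G M Z \<in> carrier_mat n n"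
  unfolding Tmap_def abs_mat_def by auto

lemma Tmap_entry:
  assumes "G \<in> carrier_mat n n" "M \<in> carrier_mat n n" "Z \<in> carrier_mat n n" "i < n" "j < n"
  shows "Tmap G M Z $$ (i,j) = G $$ (i,j) - (\<Sum>l<n. M $$ (i,l) * \<bar>Z $$ (l,j)\<bar>)"
proof -
  have "abs_mat Z \<in> carrier_mat n n" using assms unfolding abs_mat_def by auto
  hence "(M * abs_mat Z) $$ (i,j) = (\<Sum>l<n. M $$ (i,l) * abs_mat Z $$ (l,j))"
    using assms mult_entry by blast
  also have "\<dots> = (\<Sum>l<n. M $$ (i,l) * \<bar>Z $$ (l,j)\<bar>)"
    using assms unfolding abs_mat_def by (auto intro!: sum.cong)
  moreover have "(G - M * abs_mat Z) $$ (i,j) = G $$ (i,j) - (M * abs_mat Z) $$ (i,j)"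
    using assms \<open>abs_mat Z \<in> carrier_mat n n\<close> by (intro index_minus_mat) auto
  ultimately show ?thesis unfolding Tmap_def by simp
qed

lemma step_ineq:
  assumes G: "G \<in> carrier_mat n n" and M: "M \<in> carrier_mat n n"
    and Z1: "Z1 \<in> carrier_mat n n" and Z2: "Z2 \<in> carrier_mat n n" and ij: "i < n" "j < n"
  shows "\<bar>Tmap G M Z1 $$ (i,j) - Tmap G M Z2 $$ (i,j)\<bar>
     \<le> (\<Sum>l<n. abs_mat M $$ (i,l) * \<bar>Z1 $$ (l,j) - Z2 $$ (l,j)\<bar>)"
proof -
  have "\<bar>Tmap G M Z1 $$ (i,j) - Tmap G M Z2 $$ (i,j)\<bar>
     = \<bar>\<Sum>l<n. M $$ (i,l) * (\<bar>Z2 $$ (l,j)\<bar> - \<bar>Z1 $$ (l,j)\<bar>)\<bar>"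
    unfolding Tmap_entry[OF G M Z1 ij] Tmap_entry[OF G M Z2 ij]
    by (simp add: right_diff_distrib sum_subtractf)
  also have "\<dots> \<le> (\<Sum>l<n. \<bar>M $$ (i,l) * (\<bar>Z2 $$ (l,j)\<bar> - \<bar>Z1 $$ (l,j)\<bar>)\<bar>)"
    by (rule sum_abs)
  also have "\<dots> \<le> (\<Sum>l<n. abs_mat M $$ (i,l) * \<bar>Z1 $$ (l,j) - Z2 $$ (l,j)\<bar>)"
  proof (rule sum_mono)
    fix l assume l: "l \<in> {..<n}"
    have "abs_mat M $$ (i,l) = \<bar>M $$ (i,l)\<bar>" using M ij l unfolding abs_mat_def by auto
    moreover have "\<bar>\<bar>Z2 $$ (l,j)\<bar> - \<bar>Z1 $$ (l,j)\<bar>\<bar> \<le> \<bar>Z1 $$ (l,j) - Z2 $$ (l,j)\<bar>" by linarith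
    ultimately show "\<bar>M $$ (i,l) * (\<bar>Z2 $$ (l,j)\<bar> - \<bar>Z1 $$ (l,j)\<bar>)\<bar>
        \<le> abs_mat M $$ (i,l) * \<bar>Z1 $$ (l,j) - Z2 $$ (l,j)\<bar>"
      by (simp add: abs_mult mult_left_mono)
  qed
  finally show ?thesis .
qed

lemma pow_bound:
  fixes Nn :: "real mat" and D :: "nat \<Rightarrow> real mat"
  assumes Nn: "Nn \<in> carrier_mat n n" and Nnn: "\<And>i j. i < n \<Longrightarrow> j < n \<Longrightarrow> Nn $$ (i,j) \<ge> 0"
    and D: "\<And>k. D k \<in> carrier_mat n n"
    and step: "\<And>k i j. i < n \<Longrightarrow> j < n \<Longrightarrow> D (Suc k) $$ (i,j) \<le> (\<Sum>l<n. Nn $$ (i,l) * D k $$ (l,j))"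
  shows "\<And>i j. i < n \<Longrightarrow> j < n \<Longrightarrow> D k $$ (i,j) \<le> (Nn ^\<^sub>m k * D 0) $$ (i,j)"
proof (induction k)
  case 0
  then show ?case using D[of 0] Nn by simp
next
  case (Suc k)
  have "D (Suc k) $$ (i,j) \<le> (\<Sum>l<n. Nn $$ (i,l) * D k $$ (l,j))" using Suc step by blast
  also have "\<dots> \<le> (\<Sum>l<n. Nn $$ (i,l) * (Nn ^\<^sub>m k * D 0) $$ (l,j))"
    using Suc Nnn by (intro sum_mono mult_left_mono) auto
  also have "\<dots> = (Nn * (Nn ^\<^sub>m k * D 0)) $$ (i,j)"
    using mult_entry[OF Nn mult_carrier_mat[OF pow_carrier_mat[OF Nn] D[of 0]] Suc.prems] by simp
  also have "Nn * (Nn ^\<^sub>m k * D 0) = Nn ^\<^sub>m Suc k * D 0"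
    using assoc_mult_mat[OF Nn pow_carrier_mat[OF Nn] D[of 0], symmetric] pow_comm[OF Nn, of k] by simp
  finally show ?case .
qed

lemma geo_bound:
  fixes Nn :: "real mat" and D :: "nat \<Rightarrow> real mat"
  assumes Nn: "Nn \<in> carrier_mat n n" and Nnn: "\<And>i j. i < n \<Longrightarrow> j < n \<Longrightarrow> Nn $$ (i,j) \<ge> 0"
    and D: "\<And>k. D k \<in> carrier_mat n n"
    and D0: "\<And>i j. i < n \<Longrightarrow> j < n \<Longrightarrow> D 0 $$ (i,j) \<ge> 0"
    and step: "\<And>k i j. i < n \<Longrightarrow> j < n \<Longrightarrow> D (Suc k) $$ (i,j) \<le> (\<Sum>l<n. Nn $$ (i,l) * D k $$ (l,j))"
    and dec: "\<And>k i j. i < n \<Longrightarrow> j < n \<Longrightarrow> \<bar>(Nn ^\<^sub>m k) $$ (i,j)\<bar> \<le> c * r ^ k"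
    and ij: "i < n" "j < n"
  shows "D k $$ (i,j) \<le> c * r ^ k * (\<Sum>l<n. D 0 $$ (l,j))"
proof -
  have "D k $$ (i,j) \<le> (Nn ^\<^sub>m k * D 0) $$ (i,j)"
    by (rule pow_bound[of Nn n D, OF Nn Nnn D step ij])
  also have "\<dots> = (\<Sum>l<n. (Nn ^\<^sub>m k) $$ (i,l) * D 0 $$ (l,j))"
    by (rule mult_entry[OF pow_carrier_mat[OF Nn] D ij])
  also have "\<dots> \<le> (\<Sum>l<n. c * r ^ k * D 0 $$ (l,j))"
  proof (rule sum_mono)
    fix l assume l: "l \<in> {..<n}"
    have "(Nn ^\<^sub>m k) $$ (i,l) \<le> c * r ^ k" using dec[of i l k] ij l by auto
    thus "(Nn ^\<^sub>m k) $$ (i,l) * D 0 $$ (l,j) \<le> c * r ^ k * D 0 $$ (l,j)"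
      using D0[of l j] ij l by (intro mult_right_mono) auto
  qed
  also have "\<dots> = c * r ^ k * (\<Sum>l<n. D 0 $$ (l,j))" by (simp add: sum_distrib_left)
  finally show ?thesis .
qed

lemma le_zero_geo:
  fixes x K r :: real
  assumes "\<And>k. x \<le> K * r ^ k" "0 \<le> r" "r < 1"
  shows "x \<le> 0"
proof -
  have "(\<lambda>k. K * r ^ k) \<longlonglongrightarrow> K * 0"
    by (intro tendsto_mult tendsto_const LIMSEQ_power_zero) (use assms in auto)
  thus ?thesis using assms(1) by (intro LIMSEQ_le_const[of "\<lambda>k. K * r ^ k"]) auto
qed

lemma abs_mat_nonneg: "M \<in> carrier_mat n n \<Longrightarrow> i < n \<Longrightarrow> j < n \<Longrightarrow> abs_mat M $$ (i,j) \<ge> 0"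
  unfolding abs_mat_def by auto

lemma fix_unique:
  assumes G: "G \<in> carrier_mat n n" and M: "M \<in> carrier_mat n n"
    and dec: "\<And>k i j. i < n \<Longrightarrow> j < n \<Longrightarrow> \<bar>(abs_mat M ^\<^sub>m k) $$ (i,j)\<bar> \<le> c * r ^ k"
    and r: "0 \<le> r" "r < 1"
    and Z1: "Z1 \<in> carrier_mat n n" and Z2: "Z2 \<in> carrier_mat n n"
    and f1: "Tmap G M Z1 = Z1" and f2: "Tmap G M Z2 = Z2"
  shows "Z1 = Z2"
proof (rule eq_matI)
  define D where "D = mat n n (\<lambda>(i,j). \<bar>Z1 $$ (i,j) - Z2 $$ (i,j)\<bar>)"
  have Nn: "abs_mat M \<in> carrier_mat n n" using M unfolding abs_mat_def by auto
  have Dc: "\<And>k. (\<lambda>_. D) k \<in> carrier_mat n n" unfolding D_def by auto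
  have step: "(\<lambda>_. D) (Suc k) $$ (i,j) \<le> (\<Sum>l<n. abs_mat M $$ (i,l) * (\<lambda>_. D) k $$ (l,j))"
    if ij: "i < n" "j < n" for k i j
  proof -
    have "D $$ (i,j) = \<bar>Tmap G M Z1 $$ (i,j) - Tmap G M Z2 $$ (i,j)\<bar>"
      using ij f1 f2 unfolding D_def by simp
    also have "\<dots> \<le> (\<Sum>l<n. abs_mat M $$ (i,l) * \<bar>Z1 $$ (l,j) - Z2 $$ (l,j)\<bar>)"
      by (rule step_ineq[OF G M Z1 Z2 ij])
    also have "\<dots> = (\<Sum>l<n. abs_mat M $$ (i,l) * D $$ (l,j))"
      using ij unfolding D_def by (intro sum.cong) auto
    finally show ?thesis by simp
  qed
  fix i j assume "i < dim_row Z2" "j < dim_col Z2"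
  hence ij: "i < n" "j < n" using Z2 by auto
  have "\<And>k. D $$ (i,j) \<le> c * r ^ k * (\<Sum>l<n. D $$ (l,j))"
    using geo_bound[of "abs_mat M" n "\<lambda>_. D", OF Nn abs_mat_nonneg[OF M] Dc _ step dec ij]
    unfolding D_def by auto
  hence "D $$ (i,j) \<le> 0" using r by (intro le_zero_geo[of _ "c * (\<Sum>l<n. D $$ (l,j))" r]) (auto simp: ac_simps)
  thus "Z1 $$ (i,j) = Z2 $$ (i,j)" using ij unfolding D_def by simp
qed (use Z1 Z2 in auto)

lemma fix_exists:
  assumes G: "G \<in> carrier_mat n n" and M: "M \<in> carrier_mat n n"
    and dec: "\<And>k i j. i < n \<Longrightarrow> j < n \<Longrightarrow> \<bar>(abs_mat M ^\<^sub>m k) $$ (i,j)\<bar> \<le> c * r ^ k"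
    and r: "0 \<le> r" "r < 1"
  shows "\<exists>Z. Z \<in> carrier_mat n n \<and> Tmap G M Z = Z"
proof -
  define Zs where "Zs k = (Tmap G M ^^ k) (0\<^sub>m n n)" for k
  have Zc: "Zs k \<in> carrier_mat n n" for k
    by (induction k) (auto simp: Zs_def intro: Tmap_carrier[OF G M])
  have ZS: "Zs (Suc k) = Tmap G M (Zs k)" for k unfolding Zs_def by simp
  define D where "D k = mat n n (\<lambda>(i,j). \<bar>Zs (Suc k) $$ (i,j) - Zs k $$ (i,j)\<bar>)" for k
  have Nn: "abs_mat M \<in> carrier_mat n n" using M unfolding abs_mat_def by auto
  have Dc: "\<And>k. D k \<in> carrier_mat n n" unfolding D_def by auto
  have step: "D (Suc k) $$ (i,j) \<le> (\<Sum>l<n. abs_mat M $$ (i,l) * D k $$ (l,j))"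
    if ij: "i < n" "j < n" for k i j
  proof -
    have "D (Suc k) $$ (i,j) = \<bar>Tmap G M (Zs (Suc k)) $$ (i,j) - Tmap G M (Zs k) $$ (i,j)\<bar>"
      using ij unfolding D_def ZS[of "Suc k"] ZS[of k] by simp
    also have "\<dots> \<le> (\<Sum>l<n. abs_mat M $$ (i,l) * \<bar>Zs (Suc k) $$ (l,j) - Zs k $$ (l,j)\<bar>)"
      by (rule step_ineq[OF G M Zc Zc ij])
    also have "\<dots> = (\<Sum>l<n. abs_mat M $$ (i,l) * D k $$ (l,j))"
      using ij unfolding D_def by (intro sum.cong) auto
    finally show ?thesis .
  qed
  have conv: "convergent (\<lambda>k. Zs k $$ (i,j))" if ij: "i < n" "j < n" for i j
  proof -
    define S where "S = (\<Sum>l<n. D 0 $$ (l,j))"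
    define f where "f k = Zs (Suc k) $$ (i,j) - Zs k $$ (i,j)" for k
    have bnd: "norm (f k) \<le> c * S * r ^ k" for k
    proof -
      have "D k $$ (i,j) \<le> c * r ^ k * S"
        unfolding S_def
        by (rule geo_bound[of "abs_mat M" n D, OF Nn abs_mat_nonneg[OF M] Dc _ step dec ij])
          (auto simp: D_def)
      thus ?thesis using ij unfolding D_def f_def by (simp add: ac_simps)
    qed
    have "summable (\<lambda>k. c * S * r ^ k)"
      using r by (intro summable_mult summable_geometric) auto
    hence "summable f" using bnd by (rule summable_comparison_test'[where N=0])
    hence "(\<lambda>m. \<Sum>k<m. f k) \<longlonglongrightarrow> suminf f" by (rule summable_LIMSEQ)
    moreover have "(\<Sum>k<m. f k) = Zs m $$ (i,j) - Zs 0 $$ (i,j)" for m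
      unfolding f_def by (rule sum_lessThan_telescope)
    ultimately have "(\<lambda>m. Zs m $$ (i,j) - Zs 0 $$ (i,j)) \<longlonglongrightarrow> suminf f" by simp
    hence "(\<lambda>m. (Zs m $$ (i,j) - Zs 0 $$ (i,j)) + Zs 0 $$ (i,j)) \<longlonglongrightarrow> suminf f + Zs 0 $$ (i,j)"
      by (intro tendsto_add tendsto_const)
    thus ?thesis unfolding convergent_def by auto
  qed
  define L where "L = mat n n (\<lambda>(i,j). lim (\<lambda>k. Zs k $$ (i,j)))"
  have Lc: "L \<in> carrier_mat n n" unfolding L_def by auto
  have lim: "(\<lambda>k. Zs k $$ (i,j)) \<longlonglongrightarrow> L $$ (i,j)" if ij: "i < n" "j < n" for i j
    using conv[OF ij] ij unfolding L_def by (simp add: convergent_LIMSEQ_iff)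
  have "Tmap G M L = L"
  proof (rule eq_matI)
    fix i j assume "i < dim_row L" "j < dim_col L"
    hence ij: "i < n" "j < n" using Lc by auto
    have A1: "(\<lambda>k. Zs (Suc k) $$ (i,j)) \<longlonglongrightarrow> L $$ (i,j)"
      using lim[OF ij] by (rule LIMSEQ_Suc)
    have eq: "(\<lambda>k. Zs (Suc k) $$ (i,j)) = (\<lambda>k. G $$ (i,j) - (\<Sum>l<n. M $$ (i,l) * \<bar>Zs k $$ (l,j)\<bar>))"
      unfolding ZS using Tmap_entry[OF G M Zc ij] by simp
    have A2: "(\<lambda>k. G $$ (i,j) - (\<Sum>l<n. M $$ (i,l) * \<bar>Zs k $$ (l,j)\<bar>))
       \<longlonglongrightarrow> G $$ (i,j) - (\<Sum>l<n. M $$ (i,l) * \<bar>L $$ (l,j)\<bar>)"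
    proof (intro tendsto_diff tendsto_const tendsto_sum tendsto_mult tendsto_rabs)
      fix l assume "l \<in> {..<n}"
      thus "(\<lambda>k. Zs k $$ (l,j)) \<longlonglongrightarrow> L $$ (l,j)" using lim ij by auto
    qed
    have "L $$ (i,j) = G $$ (i,j) - (\<Sum>l<n. M $$ (i,l) * \<bar>L $$ (l,j)\<bar>)"
      using LIMSEQ_unique[OF A1[unfolded eq] A2] .
    thus "Tmap G M L $$ (i,j) = L $$ (i,j)" using Tmap_entry[OF G M Lc ij] by simp
  qed (use Tmap_carrier[OF G M Lc] Lc in auto)
  thus ?thesis using Lc by blast
qed


lemma assoc4:
  fixes P Q R S :: "real mat"
  assumes "P \<in> carrier_mat n n" "Q \<in> carrier_mat n n" "R \<in> carrier_mat n n" "S \<in> carrier_mat n n"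
  shows "P * Q * R * S = P * (Q * (R * S))"
proof -
  note a = assoc_mult_mat[OF assms(2,3,4)] assoc_mult_mat[OF assms(1) mult_carrier_mat[OF assms(2,3)] assms(4)]
    assoc_mult_mat[OF assms(1,2,3)]
  have "P * Q * R * S = P * (Q * R) * S" using a(3) by simp
  also have "\<dots> = P * (Q * R * S)" using a(2) .
  also have "\<dots> = P * (Q * (R * S))" using a(1) by simp
  finally show ?thesis .
qed

theorem theorem4p6:
  fixes A Ainv B C F :: "real mat" and n :: nat
  assumes "A \<in> carrier_mat n n" "B \<in> carrier_mat n n" "C \<in> carrier_mat n n" "F \<in> carrier_mat n n"
    and "Ainv \<in> carrier_mat n n" "A * Ainv = 1\<^sub>m n" "Ainv * A = 1\<^sub>m n"
    and "real_spectral_radius (abs_mat (C * Ainv * B)) < 1"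
  shows "\<exists>!X. X \<in> carrier_mat n n \<and> A * X + B * abs_mat (C * X) = F"
proof -
  note A = assms(1) and B = assms(2) and C = assms(3) and F = assms(4) and Ai = assms(5)
    and AAi = assms(6) and AiA = assms(7)
  define M where "M = C * Ainv * B"
  define G where "G = C * Ainv * F"
  have M: "M \<in> carrier_mat n n" unfolding M_def using A B C Ai by auto
  have G: "G \<in> carrier_mat n n" unfolding G_def using A F C Ai by auto
  have Nn: "abs_mat M \<in> carrier_mat n n" using M unfolding abs_mat_def by auto
  obtain c r where r: "0 \<le> r" "r < 1"
    and dec: "\<And>k i j. i < n \<Longrightarrow> j < n \<Longrightarrow> \<bar>(abs_mat M ^\<^sub>m k) $$ (i,j)\<bar> \<le> c * r ^ k"
    using decay[OF Nn assms(8)[folded M_def]] by blast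
  have absc: "\<And>Z. Z \<in> carrier_mat n n \<Longrightarrow> abs_mat Z \<in> carrier_mat n n"
    unfolding abs_mat_def by auto
  have sol: "X = Ainv * (F - B * abs_mat (C * X)) \<and> Tmap G M (C * X) = C * X"
    if X: "X \<in> carrier_mat n n" and eqn: "A * X + B * abs_mat (C * X) = F" for X
  proof -
    define W where "W = abs_mat (C * X)"
    have W: "W \<in> carrier_mat n n" unfolding W_def using absc C X by auto
    have AX: "A * X = F - B * W"
    proof (rule eq_matI)
      fix i j assume "i < dim_row (F - B * W)" "j < dim_col (F - B * W)"
      hence ij: "i < n" "j < n" using B W by auto
      have "F $$ (i,j) = (A * X) $$ (i,j) + (B * W) $$ (i,j)"
        using eqn[folded W_def] ij A X B W by auto
      thus "(A * X) $$ (i,j) = (F - B * W) $$ (i,j)" using ij F B W by auto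
    qed (use A X F B W in auto)
    have X1: "X = Ainv * (F - B * W)"
    proof -
      have "X = (Ainv * A) * X" using AiA X by simp
      also have "\<dots> = Ainv * (A * X)" using Ai A X by (rule assoc_mult_mat)
      finally show ?thesis unfolding AX .
    qed
    have "C * X = C * (Ainv * F - Ainv * (B * W))"
      using X1 mult_minus_distrib_mat[OF Ai F mult_carrier_mat[OF B W]] by simp
    also have "\<dots> = C * (Ainv * F) - C * (Ainv * (B * W))"
      using Ai F B W C by (intro mult_minus_distrib_mat) auto
    also have "C * (Ainv * F) = G" unfolding G_def using C Ai F by (simp add: assoc_mult_mat)
    also have "C * (Ainv * (B * W)) = M * W" unfolding M_def using assoc4[OF C Ai B W] by simp
    finally have "C * X = Tmap G M (C * X)" unfolding Tmap_def W_def .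
    thus ?thesis using X1 unfolding W_def by simp
  qed
  obtain Z where Z: "Z \<in> carrier_mat n n" "Tmap G M Z = Z"
    using fix_exists[OF G M dec r] by blast
  define X where "X = Ainv * (F - B * abs_mat Z)"
  have BZ: "B * abs_mat Z \<in> carrier_mat n n" using B absc[OF Z(1)] by auto
  have X: "X \<in> carrier_mat n n" unfolding X_def by (rule mult_carrier_mat[OF Ai minus_carrier_mat[OF BZ]])
  have CX: "C * X = Z"
  proof -
    have "C * X = C * (Ainv * F - Ainv * (B * abs_mat Z))"
      unfolding X_def using mult_minus_distrib_mat[OF Ai F BZ] by simp
    also have "\<dots> = C * (Ainv * F) - C * (Ainv * (B * abs_mat Z))"
      using Ai F BZ C by (intro mult_minus_distrib_mat) auto
    also have "C * (Ainv * F) = G" unfolding G_def using C Ai F by (simp add: assoc_mult_mat)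
    also have "C * (Ainv * (B * abs_mat Z)) = M * abs_mat Z" unfolding M_def using assoc4[OF C Ai B absc[OF Z(1)]] by simp
    finally show ?thesis using Z(2) unfolding Tmap_def by simp
  qed
  have AX: "A * X = F - B * abs_mat Z"
  proof -
    have "A * X = (A * Ainv) * (F - B * abs_mat Z)" unfolding X_def
      using assoc_mult_mat[OF A Ai minus_carrier_mat[OF BZ], symmetric] .
    thus ?thesis using AAi left_mult_one_mat[OF minus_carrier_mat[OF BZ]] by simp
  qed
  have Xsol: "A * X + B * abs_mat (C * X) = F"
  proof (rule eq_matI)
    fix i j assume "i < dim_row F" "j < dim_col F"
    hence ij: "i < n" "j < n" using F by auto
    show "(A * X + B * abs_mat (C * X)) $$ (i,j) = F $$ (i,j)"
      unfolding CX AX using ij carrier_matD[OF BZ] carrier_matD[OF F] by simp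
  qed (use A X F BZ CX in auto)
  show ?thesis
  proof (rule ex1I[of _ X])
    show "X \<in> carrier_mat n n \<and> A * X + B * abs_mat (C * X) = F" using X Xsol by simp
  next
    fix Y assume Y: "Y \<in> carrier_mat n n \<and> A * Y + B * abs_mat (C * Y) = F"
    have sY: "Y = Ainv * (F - B * abs_mat (C * Y))" "Tmap G M (C * Y) = C * Y"
      using sol Y by auto
    have sX: "X = Ainv * (F - B * abs_mat (C * X))" "Tmap G M (C * X) = C * X"
      using sol X Xsol by auto
    have "C * Y = C * X"
      using fix_unique[OF G M dec r _ _ sY(2) sX(2)] C X Y by auto
    thus "Y = X" using sY(1) sX(1) by simp
  qed
qed

end
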